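(* Let $p$ be an odd prime. If $\lambda$ is a nonempty BG-partition, then $\lambda^{(1)*}$ is a BG-partition; i.e. removing the $p$-rim* of a BG-partition yields a BG-partition.
   Context: Partitions: $\lambda=(\lambda_1\ge\lambda_2\ge\cdots)$ with finitely many nonzero parts; $l(\lambda)$ = number of nonzero parts; Young diagram $[\lambda]=\{(i,j): i\ge1, 1\le j\le\lambda_i\}$ ($i$ = row, increasing downward). $\lambda'$ is the conjugate; self-conjugate means $\lambda=\lambda'$. $k(\lambda)=\max\{i:\lambda_i\ge i\}$; hook length $h_{ij}=\lambda_i+\lambda'_j-i-j+1$. A BG-partition is a self-conjugate partition with $p\nmid h_{ii}$ for all $1\le i\le k(\lambda)$ (the empty partition counts as one). Rim and $p$-rim: the rim is the set of nodes $(i,j)\in[\lambda]$ with $(i+1,j+1)\notin[\lambda]$. Label rim nodes $1,2,\dots$ along the rim path from $(1,\lambda_1)$ to $(l(\lambda),1)$. The first $p$-segment is the rim nodes labelled $1,\dots,p$ (or all if fewer). If the last node $(i,j)$ of a $p$-segment lies in the last row, stop; otherwise with $l$ the smallest label in row $i+1$ the next $p$-segment is the rim nodes labelled $l,\dots,l+p-1$ (or up to the last). The $p$-rim is the union of the $p$-segments. $p$-rim*: $U_\lambda=\{(i,j)\in p\text{-rim of }\lambda: i\le j\}$, $L_\lambda=\{(j,i):(i,j)\in U_\lambda\}$, $\mathrm{Rim}^*_p(\lambda)=U_\lambda\cup L_\lambda$. $\lambda^{(1)*}$ is the partition with Young diagram $[\lambda]\setminus\mathrm{Rim}^*_p(\lambda)$.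 *)

theory Defs
  imports "HOL-Computational_Algebra.Primes"
begin

text \<open>A partition is represented by the list of its nonzero parts
  [lambda_1, lambda_2, ...], weakly decreasing and positive.  Rows and
  columns are 1-indexed.\<close>

definition is_partition :: "nat list \<Rightarrow> bool" where
  "is_partition lam \<longleftrightarrow> sorted_wrt (\<ge>) lam \<and> (\<forall>x\<in>set lam. 0 < x)"

definition part :: "nat list \<Rightarrow> nat \<Rightarrow> nat" where
  "part lam i = (if 1 \<le> i \<and> i \<le> length lam then lam ! (i - 1) else 0)"

definition plen :: "nat list \<Rightarrow> nat" where
  "plen lam = length lam"

definition diagram :: "nat list \<Rightarrow> (nat \<times> nat) set" where
  "diagram lam = {(i, j). 1 \<le> i \<and> 1 \<le> j \<and> j \<le> part lam i}"

definition conj_part :: "nat list \<Rightarrow> nat \<Rightarrow> nat" where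
  "conj_part lam j = card {i \<in> {1..length lam}. j \<le> part lam i}"

definition self_conjugate :: "nat list \<Rightarrow> bool" where
  "self_conjugate lam \<longleftrightarrow> (\<forall>i\<ge>1. part lam i = conj_part lam i)"

definition kdiag :: "nat list \<Rightarrow> nat" where
  "kdiag lam = Max ({0} \<union> {i. 1 \<le> i \<and> i \<le> part lam i})"

definition hook :: "nat list \<Rightarrow> nat \<Rightarrow> nat \<Rightarrow> int" where
  "hook lam i j = int (part lam i) + int (conj_part lam j) - int i - int j + 1"

definition BG_partition :: "nat \<Rightarrow> nat list \<Rightarrow> bool" where
  "BG_partition p lam \<longleftrightarrow> is_partition lam \<and> self_conjugate lam \<and>
     (\<forall>i. 1 \<le> i \<and> i \<le> kdiag lam \<longrightarrow> \<not> (int p dvd hook lam i i))"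

definition rim :: "nat list \<Rightarrow> (nat \<times> nat) set" where
  "rim lam = {(i, j) \<in> diagram lam. (i + 1, j + 1) \<notin> diagram lam}"

text \<open>The rim nodes listed along the rim path from (1, lambda_1) to (l, 1):
  the path goes rows top to bottom, and within a row right to left.
  Label of the node at list index t is t + 1.\<close>
definition rim_list :: "nat list \<Rightarrow> (nat \<times> nat) list" where
  "rim_list lam = filter (\<lambda>x. x \<in> rim lam)
     (concat (map (\<lambda>i. map (\<lambda>j. (i, j)) (rev [1..<part lam i + 1])) [1..<plen lam + 1]))"

definition rim_node :: "nat list \<Rightarrow> nat \<Rightarrow> nat \<times> nat" where
  "rim_node lam t = rim_list lam ! (t - 1)"

definition seg_end :: "nat \<Rightarrow> nat list \<Rightarrow> nat \<Rightarrow> nat" where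
  "seg_end p lam s = min (s + p - 1) (length (rim_list lam))"

inductive seg_start :: "nat \<Rightarrow> nat list \<Rightarrow> nat \<Rightarrow> bool" for p lam where
  seg_first: "seg_start p lam 1"
| seg_next: "\<lbrakk> seg_start p lam s;
           fst (rim_node lam (seg_end p lam s)) < plen lam \<rbrakk>
         \<Longrightarrow> seg_start p lam
               (LEAST t. 1 \<le> t \<and> t \<le> length (rim_list lam) \<and>
                         fst (rim_node lam t) = fst (rim_node lam (seg_end p lam s)) + 1)"

definition p_rim :: "nat \<Rightarrow> nat list \<Rightarrow> (nat \<times> nat) set" where
  "p_rim p lam = {rim_node lam t | s t. seg_start p lam s \<and> s \<le> t \<and> t \<le> seg_end p lam s}"

definition rim_star :: "nat \<Rightarrow> nat list \<Rightarrow> (nat \<times> nat) set" where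
  "rim_star p lam =
     (let U = {(i, j) \<in> p_rim p lam. i \<le> j} in U \<union> {(j, i) | i j. (i, j) \<in> U})"

end

theory Submission
  imports Defs
begin

definition cont :: "nat \<times> nat \<Rightarrow> int" where
  "cont x = int (snd x) - int (fst x)"

lemma sorted_rows:
  "sorted_wrt (\<lambda>x y. fst x < fst y \<or> (fst x = fst y \<and> snd y < snd x))
     (concat (map (\<lambda>i. map (\<lambda>j. (i, j)) (rev [1..<f i + 1])) [a..<b]))"
proof (induction b)
  case 0
  then show ?case by simp
next
  case (Suc b)
  have inner: "sorted_wrt (\<lambda>x y. fst x < fst y \<or> (fst x = fst y \<and> snd y < snd x))
      (map (\<lambda>j. (b, j)) (rev [1..<f b + 1]))"
    by (simp add: sorted_wrt_map sorted_wrt_rev del: upt_Suc)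
  show ?case
  proof (cases "a \<le> b")
    case True
    then show ?thesis using Suc inner
      by (auto simp add: sorted_wrt_append)
  next
    case False
    then show ?thesis by simp
  qed
qed

locale ptn0 =
  fixes lam :: "nat list"
  assumes isp: "is_partition lam"
begin

abbreviation "l \<equiv> length lam"
abbreviation "P i \<equiv> part lam i"

lemma part_mono: assumes "1 \<le> i" "i \<le> i'" shows "P i' \<le> P i"
proof (cases "i' \<le> l")
  case True
  have s: "sorted_wrt (\<ge>) lam" using isp unfolding is_partition_def by simp
  show ?thesis
  proof (cases "i = i'")
    case False
    then have "i - 1 < i' - 1" using assms by auto
    then show ?thesis using s True assms unfolding part_def
      by (auto simp: sorted_wrt_iff_nth_less)
  qed simp
next
  case False
  then show ?thesis unfolding part_def by simp
qed

lemma part_pos: assumes "1 \<le> i" "i \<le> l" shows "0 < P i"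
proof -
  have "lam ! (i - 1) \<in> set lam" using assms by simp
  then show ?thesis using isp assms unfolding is_partition_def part_def by auto
qed

lemma part_pos_iff: "0 < P i \<longleftrightarrow> 1 \<le> i \<and> i \<le> l"
  using part_pos unfolding part_def by (auto)

lemma part_le1: "P i \<le> P 1"
  using part_mono[of 1 i] by (cases "i = 0") (auto simp: part_def)

lemma diag_iff: "(i, j) \<in> diagram lam \<longleftrightarrow> 1 \<le> i \<and> 1 \<le> j \<and> j \<le> P i"
  unfolding diagram_def by simp

lemma diag_row: "(i, j) \<in> diagram lam \<Longrightarrow> i \<le> l"
  using part_pos_iff by (fastforce simp: diag_iff)

lemma conj_iff: assumes "1 \<le> i" "1 \<le> j"
  shows "i \<le> conj_part lam j \<longleftrightarrow> j \<le> P i"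
proof -
  define S where "S = {i' \<in> {1..l}. j \<le> P i'}"
  have fS: "finite S" unfolding S_def by simp
  show ?thesis
  proof
    assume "j \<le> P i"
    have "{1..i} \<subseteq> S"
    proof
      fix x assume x: "x \<in> {1..i}"
      then have "j \<le> P x" using part_mono[of x i] \<open>j \<le> P i\<close> by auto
      moreover have "0 < P x" using assms \<open>j \<le> P x\<close> by simp
      ultimately show "x \<in> S" using x part_pos_iff unfolding S_def by auto
    qed
    then have "card {1..i} \<le> card S" using fS card_mono by blast
    then show "i \<le> conj_part lam j" unfolding conj_part_def S_def by simp
  next
    assume h: "i \<le> conj_part lam j"
    show "j \<le> P i"
    proof (rule ccontr)
      assume "\<not> j \<le> P i"
      then have "S \<subseteq> {1..i-1}"
      proof -
        assume nj: "\<not> j \<le> P i"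
        { fix x assume "x \<in> S"
          then have x: "1 \<le> x" "j \<le> P x" unfolding S_def by auto
          have "x \<le> i - 1"
          proof (rule ccontr)
            assume "\<not> x \<le> i - 1"
            then have "P x \<le> P i" using part_mono[of i x] assms by simp
            then show False using x nj by simp
          qed
          then have "x \<in> {1..i-1}" using x by simp }
        then show ?thesis by blast
      qed
      then have "card S \<le> i - 1" using card_mono[of "{1..i-1}" S] by simp
      then show False using h assms unfolding conj_part_def S_def by simp
    qed
  qed
qed

lemma kd1: assumes "1 \<le> i" "i \<le> kdiag lam" shows "i \<le> P i"
proof -
  let ?S = "{0} \<union> {i. 1 \<le> i \<and> i \<le> P i}"
  have fin: "finite ?S"
  proof (rule finite_subset[of _ "{..l}"])
    show "?S \<subseteq> {..l}" using part_pos_iff by fastforce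
  qed simp
  have "kdiag lam \<in> ?S" unfolding kdiag_def using fin by (intro Max_in) auto
  then have "kdiag lam \<le> P (kdiag lam)" using assms by auto
  then show ?thesis using part_mono[of i "kdiag lam"] assms by simp
qed

lemma kd2: assumes "1 \<le> i" "i \<le> P i" shows "i \<le> kdiag lam"
proof -
  let ?S = "{0} \<union> {i. 1 \<le> i \<and> i \<le> P i}"
  have fin: "finite ?S"
  proof (rule finite_subset[of _ "{..l}"])
    show "?S \<subseteq> {..l}" using part_pos_iff by fastforce
  qed simp
  show ?thesis unfolding kdiag_def using fin assms by (intro Max_ge) auto
qed

end

locale ptn = ptn0 +
  assumes ne: "lam \<noteq> []"
begin

lemma l_pos: "1 \<le> l" using ne by (cases lam) auto

lemma rim_iff: "(i, j) \<in> rim lam \<longleftrightarrow> (i, j) \<in> diagram lam \<and> (i + 1, j + 1) \<notin> diagram lam"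
  unfolding rim_def by simp

lemma set_rim_list: "set (rim_list lam) = rim lam"
proof -
  have "rim lam \<subseteq> diagram lam" unfolding rim_def by auto
  moreover have "diagram lam \<subseteq> set (concat (map (\<lambda>i. map (\<lambda>j. (i, j)) (rev [1..<part lam i + 1])) [1..<plen lam + 1]))"
  proof
    fix x assume x: "x \<in> diagram lam"
    obtain i j where ij: "x = (i, j)" by fastforce
    have "i \<le> l" using x ij diag_row by blast
    then have "i \<in> set [1..<plen lam + 1]" using x ij by (auto simp: diag_iff plen_def)
    moreover have "(i, j) \<in> set (map (\<lambda>j. (i, j)) (rev [1..<part lam i + 1]))"
      using x ij by (auto simp: diag_iff)
    ultimately show "x \<in> set (concat (map (\<lambda>i. map (\<lambda>j. (i, j)) (rev [1..<part lam i + 1])) [1..<plen lam + 1]))"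
      using ij by (auto simp del: upt_Suc)
  qed
  ultimately show ?thesis unfolding rim_list_def set_filter by blast
qed

lemma rim_list_sorted: "sorted_wrt (\<lambda>x y. cont y < cont x) (rim_list lam)"
proof -
  let ?C = "concat (map (\<lambda>i. map (\<lambda>j. (i, j)) (rev [1..<part lam i + 1])) [1..<plen lam + 1])"
  have "sorted_wrt (\<lambda>x y. fst x < fst y \<or> (fst x = fst y \<and> snd y < snd x)) ?C"
    by (rule sorted_rows)
  then have "sorted_wrt (\<lambda>x y. x \<in> rim lam \<longrightarrow> y \<in> set ?C \<longrightarrow> cont y < cont x) ?C"
  proof (rule sorted_wrt_mono_rel[rotated])
    fix x y :: "nat \<times> nat" assume Q: "fst x < fst y \<or> (fst x = fst y \<and> snd y < snd x)"
    show "x \<in> rim lam \<longrightarrow> y \<in> set ?C \<longrightarrow> cont y < cont x"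
    proof (intro impI)
      assume xr: "x \<in> rim lam" and yC: "y \<in> set ?C"
      obtain i j where x: "x = (i, j)" by fastforce
      obtain i' j' where y: "y = (i', j')" by fastforce
      have yd: "1 \<le> j'" "j' \<le> P i'" using yC y by auto
      have xd: "(i, j) \<in> diagram lam" "(i + 1, j + 1) \<notin> diagram lam" using xr x rim_iff by auto
      show "cont y < cont x"
      proof (cases "i < i'")
        case True
        have "1 \<le> i" using xd by (simp add: diag_iff)
        have "P i' \<le> P (i+1)" using part_mono[of "i+1" i'] True by simp
        have "P (i+1) \<le> j" using xd \<open>1 \<le> i\<close> by (simp add: diag_iff)
        then show ?thesis using True yd \<open>P i' \<le> P (i+1)\<close> x y unfolding cont_def by simp
      next
        case False
        then show ?thesis using Q x y unfolding cont_def by auto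
      qed
    qed
  qed
  then have "sorted_wrt (\<lambda>x y. x \<in> rim lam \<longrightarrow> y \<in> set ?C \<longrightarrow> cont y < cont x) (rim_list lam)"
    unfolding rim_list_def by (rule sorted_wrt_filter)
  then show ?thesis
    by (rule sorted_wrt_mono_rel[rotated]) (auto simp: rim_list_def)
qed

lemma cont_rim: "cont ` rim lam = {1 - int l .. int (P 1) - 1}"
proof
  show "cont ` rim lam \<subseteq> {1 - int l .. int (P 1) - 1}"
  proof
    fix d assume "d \<in> cont ` rim lam"
    then obtain i j where "(i, j) \<in> rim lam" "d = cont (i, j)" by auto
    then have "(i, j) \<in> diagram lam" "d = int j - int i" using rim_iff cont_def by auto
    moreover have "i \<le> l" using diag_row calculation(1) by blast
    ultimately show "d \<in> {1 - int l .. int (P 1) - 1}" using diag_row part_le1[of i]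
      by (auto simp: diag_iff)
  qed
next
  show "{1 - int l .. int (P 1) - 1} \<subseteq> cont ` rim lam"
  proof
    fix d assume d: "d \<in> {1 - int l .. int (P 1) - 1}"
    define S where "S = {i. 1 \<le> i \<and> i \<le> l \<and> 1 \<le> int i + d \<and> nat (int i + d) \<le> P i}"
    have fS: "finite S" unfolding S_def by (rule finite_subset[of _ "{..l}"]) auto
    have "S \<noteq> {}"
    proof (cases "d \<ge> 0")
      case True
      then have "1 \<in> S" using d l_pos unfolding S_def by auto
      then show ?thesis by auto
    next
      case False
      let ?i = "nat (1 - d)"
      have "1 \<le> ?i" "?i \<le> l" using False d by auto
      then have "0 < P ?i" using part_pos by simp
      then have "?i \<in> S" using False d \<open>?i \<le> l\<close> unfolding S_def by auto
      then show ?thesis by auto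
    qed
    define i where "i = Max S"
    have iS: "i \<in> S" using fS \<open>S \<noteq> {}\<close> i_def by simp
    have x: "(i, nat (int i + d)) \<in> diagram lam" using iS unfolding S_def by (auto simp: diag_iff)
    have "(i + 1, nat (int i + d) + 1) \<notin> diagram lam"
    proof
      assume h: "(i + 1, nat (int i + d) + 1) \<in> diagram lam"
      then have "i + 1 \<le> l" using diag_row by blast
      then have "i + 1 \<in> S" using h iS unfolding S_def by (auto simp: diag_iff)
      then have "i + 1 \<le> i" using fS i_def by simp
      then show False by simp
    qed
    then have "(i, nat (int i + d)) \<in> rim lam" using x rim_iff by simp
    moreover have "cont (i, nat (int i + d)) = d" using iS unfolding S_def cont_def by auto
    ultimately show "d \<in> cont ` rim lam" by force
  qed
qed

lemma map_cont: "map cont (rim_list lam) = rev [1 - int l .. int (P 1) - 1]"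
proof -
  have "sorted_wrt (<) (rev (map cont (rim_list lam)))"
    using rim_list_sorted by (simp add: sorted_wrt_rev sorted_wrt_map)
  then have "rev (map cont (rim_list lam)) = [1 - int l .. int (P 1) - 1]"
    by (intro sorted_distinct_set_unique) (auto simp: strict_sorted_iff set_rim_list cont_rim)
  then show ?thesis by (metis rev_rev_ident)
qed

definition len where "len = length (rim_list lam)"

lemma len_eq: "len = P 1 + l - 1"
proof -
  have "len = length (map cont (rim_list lam))" unfolding len_def by simp
  also have "\<dots> = nat (int (P 1) - 1 - (1 - int l) + 1)" by (simp only: map_cont length_rev length_upto)
  finally show ?thesis by simp
qed

lemma node_props: assumes "1 \<le> t" "t \<le> len"
  shows "rim_node lam t \<in> rim lam" "cont (rim_node lam t) = int (P 1) - int t"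
proof -
  have tl: "t - 1 < length (rim_list lam)" using assms len_def by simp
  then show "rim_node lam t \<in> rim lam" unfolding rim_node_def using set_rim_list nth_mem by blast
  have "cont (rim_node lam t) = map cont (rim_list lam) ! (t - 1)"
    unfolding rim_node_def using tl by simp
  also have "\<dots> = rev [1 - int l .. int (P 1) - 1] ! (t - 1)" by (simp only: map_cont)
  also have "\<dots> = int (P 1) - int t"
    using assms len_eq l_pos by (simp add: rev_nth)
  finally show "cont (rim_node lam t) = int (P 1) - int t" .
qed

definition lab where "lab x = nat (int (P 1) - cont x)"

lemma lab_props: assumes "x \<in> rim lam"
  shows "1 \<le> lab x" "lab x \<le> len" "rim_node lam (lab x) = x"
proof -
  obtain n where n: "n < length (rim_list lam)" "rim_list lam ! n = x"
    using assms set_rim_list by (metis in_set_conv_nth)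
  have "cont x = int (P 1) - int (n + 1)"
    using node_props[of "n+1"] n unfolding rim_node_def len_def by simp
  then have "lab x = n + 1" unfolding lab_def by simp
  then show "1 \<le> lab x" "lab x \<le> len" "rim_node lam (lab x) = x"
    using n unfolding len_def rim_node_def by auto
qed

end

locale ptnp = ptn +
  fixes p :: nat
  assumes p1: "1 \<le> p"
begin

lemma seg_end_props: assumes "1 \<le> s" "s \<le> len"
  shows "s \<le> seg_end p lam s" "seg_end p lam s \<le> len"
  using assms p1 unfolding seg_end_def len_def by auto

lemma cont_le: "x \<in> rim lam \<Longrightarrow> cont x \<le> int (P 1) - 1"
  using cont_rim by auto

lemma lab_cont: "x \<in> rim lam \<Longrightarrow> int (lab x) = int (P 1) - cont x"
  using cont_le[of x] unfolding lab_def by simp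

lemma row_node_rim: assumes "1 \<le> r" "r \<le> l" shows "(r, P r) \<in> rim lam"
proof -
  have "(r, P r) \<in> diagram lam" using part_pos[OF assms] assms by (simp add: diag_iff)
  moreover have "P (r + 1) \<le> P r" using part_mono[of r "r+1"] assms by simp
  ultimately show ?thesis by (simp add: rim_iff diag_iff)
qed

lemma least_row: assumes "i < l"
  shows "(LEAST t. 1 \<le> t \<and> t \<le> length (rim_list lam) \<and> fst (rim_node lam t) = i + 1)
         = lab (i + 1, P (i + 1))"
proof (rule Least_equality)
  let ?y = "(i + 1, P (i + 1))"
  have yr: "?y \<in> rim lam" using row_node_rim[of "i+1"] assms by simp
  show "1 \<le> lab ?y \<and> lab ?y \<le> length (rim_list lam) \<and> fst (rim_node lam (lab ?y)) = i + 1"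
    using lab_props[OF yr] len_def by simp
  fix t assume t: "1 \<le> t \<and> t \<le> length (rim_list lam) \<and> fst (rim_node lam t) = i + 1"
  then have nr: "rim_node lam t \<in> rim lam" and nc: "cont (rim_node lam t) = int (P 1) - int t"
    using node_props[of t] len_def by auto
  obtain j where nj: "rim_node lam t = (i + 1, j)" using t by (metis prod.collapse)
  have "j \<le> P (i+1)" using nr nj by (simp add: rim_iff diag_iff)
  then have "cont (rim_node lam t) \<le> cont ?y" using nj by (simp add: cont_def)
  then show "lab ?y \<le> t" using lab_cont[OF yr] nc by simp
qed

lemma seg_start_props: assumes "seg_start p lam s"
  shows "1 \<le> s \<and> s \<le> len \<and> snd (rim_node lam s) = P (fst (rim_node lam s))"
  using assms
proof (induction rule: seg_start.induct)
  case seg_first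
  have yr: "(1, P 1) \<in> rim lam" using row_node_rim[of 1] l_pos by simp
  have "lab (1, P 1) = 1" unfolding lab_def cont_def by simp
  then have "rim_node lam 1 = (1, P 1)" using lab_props(3)[OF yr] by simp
  moreover have "0 < P 1" using part_pos[of 1] l_pos by simp
  ultimately show ?case using l_pos len_eq by simp
next
  case (seg_next s)
  let ?e = "seg_end p lam s"
  let ?i = "fst (rim_node lam ?e)"
  have il: "?i < l" using seg_next.hyps(2) plen_def by simp
  have yr: "(?i + 1, P (?i + 1)) \<in> rim lam" using row_node_rim[of "?i+1"] il by simp
  show ?case using least_row[OF il] lab_props[OF yr] by simp
qed

lemma seg_next_lab: assumes "seg_start p lam s" "fst (rim_node lam (seg_end p lam s)) = i" "i < l"
  shows "seg_start p lam (lab (i + 1, P (i + 1)))"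
proof -
  have "seg_start p lam (LEAST t. 1 \<le> t \<and> t \<le> length (rim_list lam) \<and>
        fst (rim_node lam t) = fst (rim_node lam (seg_end p lam s)) + 1)"
    using assms by (intro seg_next) (auto simp: plen_def)
  then show ?thesis using least_row[OF assms(3)] assms(2) by simp
qed

lemma p_rim_E: assumes "x \<in> p_rim p lam"
  obtains s where "seg_start p lam s" "s \<le> lab x" "lab x \<le> seg_end p lam s" "x \<in> rim lam"
proof -
  obtain s t where st: "seg_start p lam s" "s \<le> t" "t \<le> seg_end p lam s" "x = rim_node lam t"
    using assms unfolding p_rim_def by blast
  have "1 \<le> s" "s \<le> len" using seg_start_props[OF st(1)] by auto
  then have t: "1 \<le> t" "t \<le> len" using st seg_end_props by (auto intro: order_trans)
  have xr: "x \<in> rim lam" using node_props(1)[OF t] st(4) by simp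
  have "int (lab x) = int t" using lab_cont[OF xr] node_props(2)[OF t] st(4) by simp
  then have "lab x = t" by simp
  then show ?thesis using that st xr by simp
qed

lemma p_rim_I: assumes "seg_start p lam s" "s \<le> lab x" "lab x \<le> seg_end p lam s" "x \<in> rim lam"
  shows "x \<in> p_rim p lam"
  using assms lab_props(3)[OF assms(4)] unfolding p_rim_def by force

end

lemma finite_row: assumes "finite S" "\<And>j. j \<in> S \<Longrightarrow> 1 \<le> j"
  "\<And>j j'. j \<in> S \<Longrightarrow> 1 \<le> j' \<Longrightarrow> j' \<le> j \<Longrightarrow> j' \<in> S"
  shows "S = {1..card S}"
proof (cases "S = {}")
  case False
  let ?M = "Max S"
  have "S = {1..?M}"
  proof
    show "S \<subseteq> {1..?M}"
    proof
      fix j assume "j \<in> S"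
      then show "j \<in> {1..?M}" using assms(2)[of j] Max_ge[OF assms(1), of j] by simp
    qed
    show "{1..?M} \<subseteq> S"
    proof
      fix j assume "j \<in> {1..?M}"
      then show "j \<in> S" using assms(3)[OF Max_in[OF assms(1) False], of j] by simp
    qed
  qed
  moreover then have "card S = ?M" by (metis card_atLeastAtMost diff_Suc_1)
  ultimately show ?thesis by simp
qed simp

lemma exists_partition:
  fixes D :: "(nat \<times> nat) set"
  assumes fin: "finite D" and pos: "\<And>i j. (i, j) \<in> D \<Longrightarrow> 1 \<le> i \<and> 1 \<le> j"
    and dc: "\<And>i j i' j'. (i, j) \<in> D \<Longrightarrow> 1 \<le> i' \<Longrightarrow> i' \<le> i \<Longrightarrow> 1 \<le> j' \<Longrightarrow> j' \<le> j \<Longrightarrow> (i', j') \<in> D"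
  shows "\<exists>mu. is_partition mu \<and> diagram mu = D"
proof -
  define r where "r i = card {j. (i, j) \<in> D}" for i
  have rowfin: "finite {j. (i, j) \<in> D}" for i
  proof (rule finite_subset[OF _ finite_imageI[OF fin, of snd]])
    show "{j. (i, j) \<in> D} \<subseteq> snd ` D" by (auto intro: rev_image_eqI)
  qed
  have row: "{j. (i, j) \<in> D} = {1..r i}" if "1 \<le> i" for i
    unfolding r_def
  proof (rule finite_row[OF rowfin])
    show "1 \<le> j" if "j \<in> {j. (i, j) \<in> D}" for j using that pos by blast
    show "j' \<in> {j. (i, j) \<in> D}" if "j \<in> {j. (i, j) \<in> D}" "1 \<le> j'" "j' \<le> j" for j j'
      using that dc[of i j i j'] pos by blast
  qed
  have memD: "(i, j) \<in> D \<longleftrightarrow> 1 \<le> i \<and> 1 \<le> j \<and> j \<le> r i" for i j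
  proof (cases "1 \<le> i")
    case True
    have "(i, j) \<in> D \<longleftrightarrow> j \<in> {j. (i, j) \<in> D}" by simp
    also have "\<dots> \<longleftrightarrow> j \<in> {1..r i}" using row[OF True] by simp
    finally show ?thesis using True by simp
  next
    case False
    then show ?thesis using pos by auto
  qed
  have rmono: "r i' \<le> r i" if "1 \<le> i" "i \<le> i'" for i i'
  proof -
    have "{j. (i', j) \<in> D} \<subseteq> {j. (i, j) \<in> D}"
    proof
      fix j assume "j \<in> {j. (i', j) \<in> D}"
      then have "(i', j) \<in> D" by simp
      then show "j \<in> {j. (i, j) \<in> D}" using dc[of i' j i j] pos[of i' j] that by simp
    qed
    then show ?thesis unfolding r_def using rowfin card_mono by blast
  qed
  define m where "m = card {i. (i, 1) \<in> D}"
  have colfin: "finite {i. (i, 1::nat) \<in> D}"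
  proof (rule finite_subset[OF _ finite_imageI[OF fin, of fst]])
    show "{i. (i, 1::nat) \<in> D} \<subseteq> fst ` D" by (auto intro: rev_image_eqI)
  qed
  have col: "{i. (i, 1::nat) \<in> D} = {1..m}"
    unfolding m_def
  proof (rule finite_row[OF colfin])
    show "1 \<le> j" if "j \<in> {i. (i, 1::nat) \<in> D}" for j using that pos by blast
    show "j' \<in> {i. (i, 1::nat) \<in> D}" if "j \<in> {i. (i, 1::nat) \<in> D}" "1 \<le> j'" "j' \<le> j" for j j'
      using that dc[of j 1 j' 1] by simp
  qed
  have rpos: "0 < r i \<longleftrightarrow> 1 \<le> i \<and> i \<le> m" for i
  proof -
    have "0 < r i \<longleftrightarrow> (i, 1) \<in> D"
    proof (cases "i = 0")
      case True
      then have "{j. (i, j) \<in> D} = {}" using pos by fastforce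
      then show ?thesis using True pos unfolding r_def by fastforce
    next
      case False
      then show ?thesis using memD[of i 1] by linarith
    qed
    also have "\<dots> \<longleftrightarrow> i \<in> {i. (i, 1::nat) \<in> D}" by simp
    also have "\<dots> \<longleftrightarrow> 1 \<le> i \<and> i \<le> m" unfolding col by simp
    finally show ?thesis .
  qed
  define mu where "mu = map r [1..<m+1]"
  have pm: "part mu i = r i" if "1 \<le> i" for i
  proof (cases "i \<le> m")
    case True
    then have "map r [1..<m+1] ! (i - 1) = r (1 + (i - 1))" using that by (intro nth_map_upt) simp
    then show ?thesis using that True unfolding part_def mu_def by simp
  next
    case False
    then have "r i = 0" using rpos[of i] by simp
    then show ?thesis using False unfolding part_def mu_def by simp
  qed
  have "is_partition mu"
    unfolding is_partition_def
  proof
    show "sorted_wrt (\<ge>) mu" unfolding mu_def sorted_wrt_map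
      by (rule sorted_wrt_mono_rel[OF _ sorted_wrt_upt]) (auto intro: rmono)
    show "\<forall>x\<in>set mu. 0 < x" unfolding mu_def using rpos by auto
  qed
  moreover have "diagram mu = D"
  proof (intro set_eqI)
    fix x :: "nat \<times> nat"
    obtain i j where x: "x = (i, j)" by fastforce
    show "x \<in> diagram mu \<longleftrightarrow> x \<in> D"
      unfolding x diagram_def memD by (cases "1 \<le> i") (simp_all add: pm)
  qed
  ultimately show ?thesis by blast
qed

lemma conj_sym_selfconj:
  assumes "is_partition mu" "\<And>i j. (i, j) \<in> diagram mu \<Longrightarrow> (j, i) \<in> diagram mu"
  shows "self_conjugate mu"
  unfolding self_conjugate_def
proof (intro allI impI)
  interpret ptn0 mu using assms(1) by unfold_locales
  fix i :: nat assume i: "1 \<le> i"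
  have eq: "i' \<le> conj_part mu i \<longleftrightarrow> i' \<le> part mu i" if "1 \<le> i'" for i'
  proof -
    have "i' \<le> conj_part mu i \<longleftrightarrow> i \<le> part mu i'" using conj_iff[OF that i] .
    also have "\<dots> \<longleftrightarrow> (i', i) \<in> diagram mu" using that i by (simp add: diag_iff)
    also have "\<dots> \<longleftrightarrow> (i, i') \<in> diagram mu" using assms(2) by blast
    also have "\<dots> \<longleftrightarrow> i' \<le> part mu i" using that i by (simp add: diag_iff)
    finally show ?thesis .
  qed
  show "part mu i = conj_part mu i"
  proof (rule ccontr)
    assume ne: "part mu i \<noteq> conj_part mu i"
    let ?M = "max (part mu i) (conj_part mu i)"
    have "1 \<le> ?M" using ne by linarith
    then show False using eq[of ?M] ne by (simp add: max_def split: if_splits)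
  qed
qed


locale sc = ptnp +
  assumes selfc: "self_conjugate lam"
begin

lemma diag_sym: "(i, j) \<in> diagram lam \<Longrightarrow> (j, i) \<in> diagram lam"
proof -
  assume h: "(i, j) \<in> diagram lam"
  then have ij: "1 \<le> i" "1 \<le> j" "j \<le> P i" by (auto simp: diag_iff)
  then have "i \<le> conj_part lam j" using conj_iff by simp
  then have "i \<le> P j" using selfc ij unfolding self_conjugate_def by simp
  then show ?thesis using ij by (simp add: diag_iff)
qed

definition "R = rim_star p lam"
definition "D = diagram lam - R"

lemma R_iff: "(i, j) \<in> R \<longleftrightarrow> ((i, j) \<in> p_rim p lam \<and> i \<le> j) \<or> ((j, i) \<in> p_rim p lam \<and> j \<le> i)"
  unfolding R_def rim_star_def Let_def by auto

lemma D_sym: "(i, j) \<in> D \<Longrightarrow> (j, i) \<in> D"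
  unfolding D_def using diag_sym R_iff by blast

lemma lab_step: assumes "x \<in> rim lam" "y \<in> rim lam" "cont y = cont x - 1"
  shows "lab y = lab x + 1"
  using lab_cont[OF assms(1)] lab_cont[OF assms(2)] assms(3) by simp

lemma diag_dc: "(i, j) \<in> diagram lam \<Longrightarrow> 1 \<le> i' \<Longrightarrow> i' \<le> i \<Longrightarrow> 1 \<le> j' \<Longrightarrow> j' \<le> j \<Longrightarrow> (i', j') \<in> diagram lam"
  using part_mono[of i' i] by (auto simp: diag_iff)

lemma D_left: assumes "(i, j) \<in> D" "2 \<le> j" shows "(i, j - 1) \<in> D"
proof (rule ccontr)
  assume nD: "(i, j - 1) \<notin> D"
  have ijd: "(i, j) \<in> diagram lam" and ijR: "(i, j) \<notin> R" using assms unfolding D_def by auto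
  then have i1: "1 \<le> i" by (simp add: diag_iff)
  have "(i, j - 1) \<in> diagram lam" using diag_dc[OF ijd, of i "j-1"] assms i1 by simp
  then have "(i, j - 1) \<in> R" using nD unfolding D_def by simp
  then have cases: "((i, j - 1) \<in> p_rim p lam \<and> i \<le> j - 1) \<or> ((j - 1, i) \<in> p_rim p lam \<and> j \<le> i)"
  proof -
    have "((i, j - 1) \<in> p_rim p lam \<and> i \<le> j - 1) \<or> ((j - 1, i) \<in> p_rim p lam \<and> j - 1 \<le> i)"
      using \<open>(i, j - 1) \<in> R\<close> R_iff by blast
    then show ?thesis
    proof
      assume "(j - 1, i) \<in> p_rim p lam \<and> j - 1 \<le> i"
      then show ?thesis by (cases "j - 1 = i") auto
    qed simp
  qed
  then show False
  proof
    assume A: "(i, j - 1) \<in> p_rim p lam \<and> i \<le> j - 1"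
    then obtain s where s: "seg_start p lam s" "s \<le> lab (i, j - 1)" "lab (i, j - 1) \<le> seg_end p lam s"
      and xr: "(i, j - 1) \<in> rim lam" by (auto elim: p_rim_E)
    have "(i + 1, j) \<notin> diagram lam" using xr assms(2) by (simp add: rim_iff)
    then have "(i + 1, j + 1) \<notin> diagram lam" using assms(2) by (auto simp: diag_iff)
    then have yr: "(i, j) \<in> rim lam" using ijd by (simp add: rim_iff)
    have ynp: "(i, j) \<notin> p_rim p lam" using ijR A R_iff by auto
    have "lab (i, j - 1) = lab (i, j) + 1" using lab_step[OF yr xr] assms(2) by (simp add: cont_def)
    then have "s = lab (i, j - 1)"
    proof -
      assume e: "lab (i, j - 1) = lab (i, j) + 1"
      have "\<not> s \<le> lab (i, j)"
      proof
        assume "s \<le> lab (i, j)"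
        moreover have "lab (i, j) \<le> seg_end p lam s" using e s(3) by simp
        ultimately have "(i, j) \<in> p_rim p lam" using p_rim_I[OF s(1) _ _ yr] by simp
        then show False using ynp by simp
      qed
      then show ?thesis using e s(2) by simp
    qed
    then have "rim_node lam s = (i, j - 1)" using lab_props(3)[OF xr] by simp
    then have "j - 1 = P i" using seg_start_props[OF s(1)] by simp
    then show False using ijd assms(2) by (auto simp: diag_iff)
  next
    assume B: "(j - 1, i) \<in> p_rim p lam \<and> j \<le> i"
    then obtain s where s: "seg_start p lam s" "s \<le> lab (j - 1, i)" "lab (j - 1, i) \<le> seg_end p lam s"
      and xr: "(j - 1, i) \<in> rim lam" by (auto elim: p_rim_E)
    have yd: "(j, i) \<in> diagram lam" using diag_sym[OF ijd] .
    have ynp: "(j, i) \<notin> p_rim p lam" using ijR B R_iff by auto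
    have "(j, i + 1) \<notin> diagram lam" using xr assms(2) by (simp add: rim_iff)
    then have Pj: "P j = i" using yd by (simp add: diag_iff)
    have "(j + 1, i + 1) \<notin> diagram lam" using Pj part_mono[of j "j+1"] assms(2) by (auto simp: diag_iff)
    then have yr: "(j, i) \<in> rim lam" using yd by (simp add: rim_iff)
    have ly: "lab (j, i) = lab (j - 1, i) + 1" using lab_step[OF xr yr] assms(2) by (simp add: cont_def)
    have "1 \<le> s" "s \<le> len" using seg_start_props[OF s(1)] by auto
    have "lab (j, i) \<le> len" using lab_props[OF yr] by simp
    have eq: "lab (j - 1, i) = seg_end p lam s"
    proof (rule ccontr)
      assume "lab (j - 1, i) \<noteq> seg_end p lam s"
      then have "lab (j, i) \<le> seg_end p lam s" using ly s(3) by simp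
      then have "(j, i) \<in> p_rim p lam" using p_rim_I[OF s(1) _ _ yr] ly s(2) by simp
      then show False using ynp by simp
    qed
    have "fst (rim_node lam (seg_end p lam s)) = j - 1"
      using lab_props(3)[OF xr] eq by simp
    moreover have "j - 1 < l" using diag_row[OF yd] assms(2) by simp
    ultimately have "seg_start p lam (lab (j - 1 + 1, P (j - 1 + 1)))"
      using seg_next_lab[OF s(1)] by blast
    then have ss: "seg_start p lam (lab (j, i))" using Pj assms(2) by simp
    have "1 \<le> lab (j, i)" "lab (j, i) \<le> len" using lab_props[OF yr] by auto
    then have "lab (j, i) \<le> seg_end p lam (lab (j, i))" using seg_end_props by simp
    then have "(j, i) \<in> p_rim p lam" using p_rim_I[OF ss _ _ yr] by simp
    then show False using ynp by simp
  qed
qed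

lemma D_up: assumes "(i, j) \<in> D" "2 \<le> i" shows "(i - 1, j) \<in> D"
  using D_left[OF D_sym[OF assms(1)] assms(2)] D_sym by blast

lemma D_pos: "(i, j) \<in> D \<Longrightarrow> 1 \<le> i \<and> 1 \<le> j"
  unfolding D_def by (auto simp: diag_iff)

lemma D_dc_row: "(i, j) \<in> D \<Longrightarrow> 1 \<le> j' \<Longrightarrow> j' \<le> j \<Longrightarrow> (i, j') \<in> D"
proof (induction j arbitrary: j')
  case 0
  then show ?case by simp
next
  case (Suc j)
  show ?case
  proof (cases "j' = Suc j")
    case False
    then have "j' \<le> j" using Suc by simp
    moreover have "(i, j) \<in> D" using D_left[of i "Suc j"] Suc.prems \<open>j' \<le> j\<close> by simp
    ultimately show ?thesis using Suc by blast
  qed (use Suc in simp)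
qed

lemma D_dc: "(i, j) \<in> D \<Longrightarrow> 1 \<le> i' \<Longrightarrow> i' \<le> i \<Longrightarrow> 1 \<le> j' \<Longrightarrow> j' \<le> j \<Longrightarrow> (i', j') \<in> D"
proof -
  assume a: "(i, j) \<in> D" "1 \<le> i'" "i' \<le> i" "1 \<le> j'" "j' \<le> j"
  have "(i', j) \<in> D" using D_dc_row[OF D_sym[OF a(1)] a(2,3)] D_sym by blast
  then show "(i', j') \<in> D" using D_dc_row a by blast
qed

lemma D_fin: "finite D"
proof -
  have "D \<subseteq> {..l} \<times> {..P 1}" unfolding D_def using diag_row part_le1
    by (auto simp: diag_iff intro: order_trans)
  then show ?thesis by (rule finite_subset) simp
qed

end

lemma hook_sc: assumes "self_conjugate mu" "1 \<le> i"
  shows "hook mu i i = 2 * int (part mu i) - 2 * int i + 1"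
  using assms unfolding hook_def self_conjugate_def by simp

context sc
begin

lemma D_diag_ok:
  assumes bg: "\<And>r. 1 \<le> r \<Longrightarrow> r \<le> P r \<Longrightarrow> \<not> int p dvd (2 * int (P r) - 2 * int r + 1)"
    and ma: "(m, a) \<in> D" "(m, a + 1) \<notin> D" "m \<le> a"
  shows "\<not> int p dvd (2 * int a - 2 * int m + 1)"
proof -
  have mad: "(m, a) \<in> diagram lam" and maR: "(m, a) \<notin> R" using ma unfolding D_def by auto
  have m1: "1 \<le> m" using mad by (simp add: diag_iff)
  show ?thesis
  proof (cases "(m, a + 1) \<in> diagram lam")
    case False
    then have "P m = a" using mad by (simp add: diag_iff)
    then show ?thesis using bg[OF m1] ma(3) by simp
  next
    case True
    then have "(m, a + 1) \<in> R" using ma(2) unfolding D_def by simp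
    then have xp: "(m, a + 1) \<in> p_rim p lam" using R_iff ma(3) by auto
    then obtain s where s: "seg_start p lam s" "s \<le> lab (m, a + 1)" "lab (m, a + 1) \<le> seg_end p lam s"
      and xr: "(m, a + 1) \<in> rim lam" by (auto elim: p_rim_E)
    show ?thesis
    proof (cases "(m + 1, a + 1) \<in> diagram lam")
      case True
      have "(m + 1, a + 2) \<notin> diagram lam" using xr by (simp add: rim_iff)
      then have "P (m + 1) = a + 1" using True by (simp add: diag_iff)
      then show ?thesis using bg[of "m+1"] ma(3) by simp
    next
      case False
      then have yr: "(m, a) \<in> rim lam" using mad by (simp add: rim_iff)
      have ynp: "(m, a) \<notin> p_rim p lam" using maR R_iff ma(3) by auto
      have ly: "lab (m, a) = lab (m, a + 1) + 1" using lab_step[OF xr yr] by (simp add: cont_def)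
      have "lab (m, a) \<le> len" using lab_props[OF yr] by simp
      have eq: "lab (m, a + 1) = seg_end p lam s"
      proof (rule ccontr)
        assume "lab (m, a + 1) \<noteq> seg_end p lam s"
        then have "lab (m, a) \<le> seg_end p lam s" using ly s(3) by simp
        then have "(m, a) \<in> p_rim p lam" using p_rim_I[OF s(1) _ _ yr] ly s(2) by simp
        then show False using ynp by simp
      qed
      then have "lab (m, a + 1) = s + p - 1"
        using \<open>lab (m, a) \<le> len\<close> ly unfolding seg_end_def len_def by auto
      have sp: "1 \<le> s" "s \<le> len" "snd (rim_node lam s) = P (fst (rim_node lam s))"
        using seg_start_props[OF s(1)] by auto
      obtain r c where rc: "rim_node lam s = (r, c)" by fastforce
      have nr: "(r, c) \<in> rim lam" using node_props(1)[OF sp(1,2)] rc by simp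
      have cc: "cont (r, c) = int (P 1) - int s" using node_props(2)[OF sp(1,2)] rc by simp
      have cP: "c = P r" using sp(3) rc by simp
      have r1: "1 \<le> r" using nr by (simp add: rim_iff diag_iff)
      have "int (lab (m, a + 1)) = int (P 1) - cont (m, a + 1)" using lab_cont[OF xr] .
      then have key: "int c - int r = int a - int m + int p"
        using cc \<open>lab (m, a + 1) = s + p - 1\<close> p1 unfolding cont_def by simp
      then have "r \<le> P r" using cP ma(3) by linarith
      then have nd: "\<not> int p dvd (2 * int c - 2 * int r + 1)" using bg[OF r1] cP by simp
      have "2 * int c - 2 * int r + 1 = (2 * int a - 2 * int m + 1) + int p * 2" using key by simp
      then show ?thesis using nd by (metis dvd_add dvd_triv_left)
    qed
  qed
qed

end

theorem lemma3p22:
  fixes p :: nat and lam :: "nat list"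
  assumes "prime p" and "odd p"
    and "BG_partition p lam" and "lam \<noteq> []"
  shows "\<exists>mu. is_partition mu \<and> diagram mu = diagram lam - rim_star p lam
              \<and> BG_partition p mu"
proof -
  have isp: "is_partition lam" and scl: "self_conjugate lam"
    and bgl: "\<And>i. 1 \<le> i \<Longrightarrow> i \<le> kdiag lam \<Longrightarrow> \<not> int p dvd hook lam i i"
    using assms(3) unfolding BG_partition_def by auto
  have p1: "1 \<le> p" using assms(1) prime_ge_1_nat by blast
  interpret sc lam p using isp assms(4) p1 scl by unfold_locales
  have bg: "\<not> int p dvd (2 * int (P r) - 2 * int r + 1)" if "1 \<le> r" "r \<le> P r" for r
    using bgl[OF that(1) kd2[OF that]] hook_sc[OF scl that(1)] by simp
  obtain mu where mu: "is_partition mu" "diagram mu = D"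
    using exists_partition[OF D_fin, of] D_pos D_dc by blast
  interpret m: ptn0 mu using mu(1) by unfold_locales
  have scm: "self_conjugate mu"
    using conj_sym_selfconj[OF mu(1)] D_sym mu(2) by blast
  have "BG_partition p mu"
    unfolding BG_partition_def
  proof (intro conjI allI impI mu(1) scm)
    fix m assume m: "1 \<le> m \<and> m \<le> kdiag mu"
    let ?a = "part mu m"
    have ma: "m \<le> ?a" using m.kd1 m by simp
    have "(m, ?a) \<in> D" "(m, ?a + 1) \<notin> D" using mu(2)[symmetric] m ma by (auto simp: m.diag_iff)
    then have "\<not> int p dvd (2 * int ?a - 2 * int m + 1)" using D_diag_ok[OF bg _ _ ma] by blast
    then show "\<not> int p dvd hook mu m m" using hook_sc[OF scm] m by simp
  qed
  then show ?thesis using mu unfolding D_def R_def by blast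
qed

end
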